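(* If $\Gamma\vdash M:\sigma$ is derivable in $\cap ES$, then $\Gamma\vdash M^{\flat}:\sigma$ is derivable in $\cap J$.
   Context: Terms $\mathtt T_J$: $t,u,r ::= x \mid \lambda x.t \mid t(u,y.r)$ ($y$ bound in $r$), up to $\alpha$-equivalence. ES terms: $M,N,P ::= x \mid \lambda x.M \mid MN \mid M[x\backslash N]$ ($x$ bound in $M$ in $M[x\backslash N]$). Translation $(\cdot)^\flat$: ES $\to\mathtt T_J$: $x^\flat=x$, $(\lambda x.M)^\flat=\lambda x.M^\flat$, $(MN)^\flat=M^\flat(N^\flat,z.z)$, $(M[x\backslash N])^\flat=(\lambda z.z)(N^\flat,x.M^\flat)$ ($z$ fresh). Types $\sigma,\tau ::= \alpha \mid \mathcal M\to\sigma$, $\mathcal M=[\sigma_i]_{i\in I}$ a finite possibly empty multiset; $\sqcup$ multiset union; environments map variables to multisets, $\wedge$ pointwise union, $\Gamma;x:\mathcal M$ extension with $x\notin\mathrm{dom}\,\Gamma$; $\mathrm{ch}(\mathcal M)=\mathcal M$ if $\mathcal M\ne[\,]$, $\mathrm{ch}([\,])=[\tau]$ for an arbitrary $\tau$. Both systems share rules (var) $x:[\sigma]\vdash x:\sigma$; (abs) from $\Gamma;x:\mathcal M\vdash t:\sigma$ infer $\Gamma\vdash\lambda x.t:\mathcal M\to\sigma$; (many) from $(\Gamma_i\vdash t:\sigma_i)_{i\in I}$, $I\ne\emptyset$, infer $\wedge_i\Gamma_i\vdash t:[\sigma_i]_{i\in I}$. $\cap J$ additionally has (app): from $\Gamma\vdash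 t:\mathrm{ch}([\mathcal M_i\to\tau_i]_{i\in I})$, $\Delta\vdash u:\mathrm{ch}(\sqcup_i\mathcal M_i)$, $\Lambda;y:[\tau_i]_{i\in I}\vdash r:\sigma$ infer $\Gamma\wedge\Delta\wedge\Lambda\vdash t(u,y.r):\sigma$. $\cap ES$ additionally has (app): from $\Gamma\vdash M:\mathcal M\to\sigma$ and $\Delta\vdash N:\mathrm{ch}(\mathcal M)$ infer $\Gamma\wedge\Delta\vdash MN:\sigma$; and (sub): from $\Gamma;x:\mathcal M\vdash P:\sigma$ and $\Delta\vdash N:\mathrm{ch}(\mathcal M)$ infer $\Gamma\wedge\Delta\vdash P[x\backslash N]:\sigma$. *)

theory Defs
  imports "HOL-Library.Multiset"
begin

text \<open>Terms are represented with de Bruijn indices, so that they are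
  identified up to alpha-equivalence; a binder binds index 0.\<close>

(* T_J terms: x | \<lambda>x.t | t(u, y.r) with y (index 0) bound in r *)
datatype jterm = JVar nat | JLam jterm | JApp jterm jterm jterm

(* ES terms: x | \<lambda>x.M | M N | M[x\N] with x (index 0) bound in M *)
datatype esterm = EVar nat | ELam esterm | EAppl esterm esterm | ESub esterm esterm

(* translation (.)^flat; the fresh z is the bound index 0 *)
fun flat :: "esterm \<Rightarrow> jterm" where
  "flat (EVar x) = JVar x"
| "flat (ELam M) = JLam (flat M)"
| "flat (EAppl M N) = JApp (flat M) (flat N) (JVar 0)"
| "flat (ESub M N) = JApp (JLam (JVar 0)) (flat N) (flat M)"

datatype ty = TyVar nat | Fun "ty multiset" ty

type_synonym env = "nat \<Rightarrow> ty multiset"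

definition env_and :: "env \<Rightarrow> env \<Rightarrow> env" where
  "env_and \<Gamma> \<Delta> = (\<lambda>x. \<Gamma> x + \<Delta> x)"

(* \<Gamma>; x:\<M>  -- extension by the newly bound variable (index 0) *)
definition env_ext :: "env \<Rightarrow> ty multiset \<Rightarrow> env" where
  "env_ext \<Gamma> M = (\<lambda>n. case n of 0 \<Rightarrow> M | Suc k \<Rightarrow> \<Gamma> k)"

definition env_single :: "nat \<Rightarrow> ty \<Rightarrow> env" where
  "env_single x \<sigma> = (\<lambda>y. if y = x then {#\<sigma>#} else {#})"

(* is_ch M M' : M' is a possible value of ch(M) *)
definition is_ch :: "ty multiset \<Rightarrow> ty multiset \<Rightarrow> bool" where
  "is_ch M M' \<longleftrightarrow> (M \<noteq> {#} \<and> M' = M) \<or> (M = {#} \<and> (\<exists>\<tau>. M' = {#\<tau>#}))"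

(* System \<cap>J; tyJm encodes rule (many) for a non-empty finite family *)
inductive tyJ :: "env \<Rightarrow> jterm \<Rightarrow> ty \<Rightarrow> bool"
  and tyJm :: "env \<Rightarrow> jterm \<Rightarrow> ty multiset \<Rightarrow> bool" where
  J_var: "tyJ (env_single x \<sigma>) (JVar x) \<sigma>"
| J_abs: "tyJ (env_ext \<Gamma> M) t \<sigma> \<Longrightarrow> tyJ \<Gamma> (JLam t) (Fun M \<sigma>)"
| J_many1: "tyJ \<Gamma> t \<sigma> \<Longrightarrow> tyJm \<Gamma> t {#\<sigma>#}"
| J_many2: "tyJm \<Gamma> t Ms \<Longrightarrow> tyJ \<Delta> t \<sigma> \<Longrightarrow> tyJm (env_and \<Gamma> \<Delta>) t (add_mset \<sigma> Ms)"
| J_app: "is_ch (image_mset (\<lambda>(M, \<tau>). Fun M \<tau>) P) A \<Longrightarrow> tyJm \<Gamma> t A \<Longrightarrow>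
          is_ch (sum_mset (image_mset fst P)) B \<Longrightarrow> tyJm \<Delta> u B \<Longrightarrow>
          tyJ (env_ext \<Lambda> (image_mset snd P)) r \<sigma> \<Longrightarrow>
          tyJ (env_and (env_and \<Gamma> \<Delta>) \<Lambda>) (JApp t u r) \<sigma>"

inductive tyES :: "env \<Rightarrow> esterm \<Rightarrow> ty \<Rightarrow> bool"
  and tyESm :: "env \<Rightarrow> esterm \<Rightarrow> ty multiset \<Rightarrow> bool" where
  ES_var: "tyES (env_single x \<sigma>) (EVar x) \<sigma>"
| ES_abs: "tyES (env_ext \<Gamma> M) t \<sigma> \<Longrightarrow> tyES \<Gamma> (ELam t) (Fun M \<sigma>)"
| ES_many1: "tyES \<Gamma> t \<sigma> \<Longrightarrow> tyESm \<Gamma> t {#\<sigma>#}"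
| ES_many2: "tyESm \<Gamma> t Ms \<Longrightarrow> tyES \<Delta> t \<sigma> \<Longrightarrow> tyESm (env_and \<Gamma> \<Delta>) t (add_mset \<sigma> Ms)"
| ES_app: "tyES \<Gamma> M (Fun Ms \<sigma>) \<Longrightarrow> is_ch Ms B \<Longrightarrow> tyESm \<Delta> N B \<Longrightarrow>
           tyES (env_and \<Gamma> \<Delta>) (EAppl M N) \<sigma>"
| ES_sub: "tyES (env_ext \<Gamma> Ms) P \<sigma> \<Longrightarrow> is_ch Ms B \<Longrightarrow> tyESm \<Delta> N B \<Longrightarrow>
           tyES (env_and \<Gamma> \<Delta>) (ESub P N) \<sigma>"

end

theory Submission
  imports Defs
begin

lemma ext_empty: "env_ext (\<lambda>_. {#}) {#\<tau>#} = env_single 0 \<tau>"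
  by (rule ext) (simp add: env_ext_def env_single_def split: nat.split)

lemma id_ty: "tyJ (\<lambda>_. {#}) (JLam (JVar 0)) (Fun {#\<tau>#} \<tau>)"
  by (rule J_abs) (simp add: ext_empty J_var)

lemma and_empty: "env_and (\<lambda>_. {#}) (\<lambda>_. {#}) = (\<lambda>_. {#})"
  by (simp add: env_and_def)

lemma id_tym: "A \<noteq> {#} \<Longrightarrow> tyJm (\<lambda>_. {#}) (JLam (JVar 0)) (image_mset (\<lambda>\<tau>. Fun {#\<tau>#} \<tau>) A)"
proof (induction A)
  case empty then show ?case by simp
next
  case (add x A)
  show ?case
  proof (cases "A = {#}")
    case True then show ?thesis by (simp add: J_many1 id_ty)
  next
    case False
    then have "tyJm (\<lambda>_. {#}) (JLam (JVar 0)) (image_mset (\<lambda>\<tau>. Fun {#\<tau>#} \<tau>) A)" using add by blast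
    from J_many2[OF this id_ty[of x]] show ?thesis by (simp add: and_empty)
  qed
qed

lemma main_aux:
  shows "tyES G M s \<Longrightarrow> tyJ G (flat M) s" and "tyESm G' M' Ms \<Longrightarrow> tyJm G' (flat M') Ms"
proof (induction rule: tyES_tyESm.inducts)
  case (ES_var x \<sigma>)
  then show ?case by (simp add: J_var)
next
  case (ES_abs \<Gamma> M t \<sigma>)
  then show ?case by (simp add: J_abs)
next
  case (ES_many1 \<Gamma> t \<sigma>)
  then show ?case by (simp add: J_many1)
next
  case (ES_many2 \<Gamma> t Ms \<Delta> \<sigma>)
  then show ?case by (simp add: J_many2)
next
  case (ES_app \<Gamma> M Ms \<sigma> B \<Delta> N)
  have c1: "is_ch (image_mset (\<lambda>(M, \<tau>). Fun M \<tau>) {#(Ms, \<sigma>)#}) {#Fun Ms \<sigma>#}"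
    by (simp add: is_ch_def)
  have c2: "is_ch (sum_mset (image_mset fst {#(Ms, \<sigma>)#})) B" using ES_app by simp
  have r: "tyJ (env_ext (\<lambda>_. {#}) (image_mset snd {#(Ms, \<sigma>)#})) (JVar 0) \<sigma>"
    by (simp add: ext_empty J_var)
  from J_app[OF c1 J_many1[OF ES_app.IH(1)] c2 ES_app.IH(2) r]
  have "tyJ (env_and (env_and \<Gamma> \<Delta>) (\<lambda>_. {#})) (JApp (flat M) (flat N) (JVar 0)) \<sigma>" .
  moreover have "env_and (env_and \<Gamma> \<Delta>) (\<lambda>_. {#}) = env_and \<Gamma> \<Delta>" by (simp add: env_and_def)
  ultimately show ?case by simp
next
  case (ES_sub \<Gamma> Ms P \<sigma> B \<Delta> N)
  have eq: "env_and (env_and (\<lambda>_. {#}) \<Delta>) \<Gamma> = env_and \<Gamma> \<Delta>"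
    by (rule ext) (simp add: env_and_def add.commute)
  show ?case
  proof (cases "Ms = {#}")
    case True
    define a where "a = Fun {#TyVar 0#} (TyVar 0)"
    have c1: "is_ch (image_mset (\<lambda>(M, \<tau>). Fun M \<tau>) ({#} :: (ty multiset \<times> ty) multiset)) {#a#}"
      by (simp add: is_ch_def)
    have c2: "is_ch (sum_mset (image_mset fst ({#} :: (ty multiset \<times> ty) multiset))) B"
      using ES_sub True by simp
    have r: "tyJ (env_ext \<Gamma> (image_mset snd ({#} :: (ty multiset \<times> ty) multiset))) (flat P) \<sigma>"
      using ES_sub True by simp
    have h: "tyJm (\<lambda>_. {#}) (JLam (JVar 0)) {#a#}" unfolding a_def by (rule J_many1[OF id_ty])
    from J_app[OF c1 h c2 ES_sub.IH(2) r] eq show ?thesis by simp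
  next
    case False
    define Pm where "Pm = image_mset (\<lambda>\<tau>. ({#\<tau>#}, \<tau>)) Ms"
    have c1: "is_ch (image_mset (\<lambda>(M, \<tau>). Fun M \<tau>) Pm) (image_mset (\<lambda>\<tau>. Fun {#\<tau>#} \<tau>) Ms)"
      using False by (simp add: is_ch_def Pm_def multiset.map_comp comp_def)
    have s: "sum_mset (image_mset fst Pm) = Ms"
      unfolding Pm_def by (induction Ms) auto
    have c2: "is_ch (sum_mset (image_mset fst Pm)) B" using ES_sub s by simp
    have r: "tyJ (env_ext \<Gamma> (image_mset snd Pm)) (flat P) \<sigma>"
      using ES_sub by (simp add: Pm_def multiset.map_comp comp_def)
    from J_app[OF c1 id_tym[OF False] c2 ES_sub.IH(2) r] eq show ?thesis by simp
  qed
qed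


theorem mainTheorem18:
assumes "tyES \<Gamma> M \<sigma>"
shows "tyJ \<Gamma> (flat M) \<sigma>"
using assms by (rule main_aux(1))

end
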